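(* Let $\mathcal{D}=\{(\mathbf{x}_i,y_i)\}_{i\in\mathcal{D}}$ be a finite training set with inputs $\mathcal{X}=\{\mathbf{x}_i\}_{i\in\mathcal{D}}$, let $\boldsymbol{\phi}_i=\boldsymbol{\phi}(\mathbf{x}_i)\in\mathbb{R}^P$ be feature vectors, and consider the generalized linear model $f_{\mathbf{w}}^i=\boldsymbol{\phi}_i^\top\mathbf{w}$, $\mathbf{w}\in\mathbb{R}^P$. Let $A$ be the (strictly convex, differentiable) log-partition function of a scalar exponential family, $h=A'$, and define the loss $\ell(y,h(f))=-yf+A(f)$, with $\ell_i(\mathbf{w})=\ell(y_i,h(f_{\mathbf{w}}^i))$. Let $\mathcal{R}(\mathbf{w})=\tfrac12\delta\|\mathbf{w}\|^2$ with $\delta>0$, and let $$\mathbf{w}_*=\arg\min_{\mathbf{w}}\sum_{i\in\mathcal{D}}\ell_i(\mathbf{w})+\mathcal{R}(\mathbf{w}).$$ Define the K-prior with memory $\mathcal{M}=\mathcal{X}$: $$\mathcal{K}(\mathbf{w};\mathbf{w}_*,\mathcal{X})=\sum_{i\in\mathcal{X}}\ell\big(h(f_{\mathbf{w}_*}^i),h(f_{\mathbf{w}}^i)\big)+\tfrac12\delta\|\mathbf{w}-\mathbf{w}_*\|^2,$$ where $\ell(h(f_{\mathbf{w}_*}^i),h(f_{\mathbf{w}}^i))=-h(f_{\mathbf{w}_*}^i)f_{\mathbf{w}}^i+A(f_{\mathbf{w}}^i)$. Let $j\notin\mathcal{D}$ be a new example $(\mathbf{x}_j,y_j)$ and $k\in\mathcal{D}$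 an existing example, and define $$\mathbf{w}_+=\arg\min_{\mathbf{w}}\sum_{i\in\mathcal{D}\cup j}\ell_i(\mathbf{w})+\mathcal{R}(\mathbf{w}),\qquad \mathbf{w}_-=\arg\min_{\mathbf{w}}\sum_{i\in\mathcal{D}\setminus k}\ell_i(\mathbf{w})+\mathcal{R}(\mathbf{w}),$$ $$\hat{\mathbf{w}}_+=\arg\min_{\mathbf{w}}\ \ell_j(\mathbf{w})+\mathcal{K}(\mathbf{w};\mathbf{w}_*,\mathcal{X}),\qquad \hat{\mathbf{w}}_-=\arg\min_{\mathbf{w}}\ -\ell_k(\mathbf{w})+\mathcal{K}(\mathbf{w};\mathbf{w}_*,\mathcal{X}).$$ Then $\mathbf{w}_+=\hat{\mathbf{w}}_+$ and $\mathbf{w}_-=\hat{\mathbf{w}}_-$.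
   Context: All minimizations are over the parameter space $\mathbb{R}^P$. $\mathbf{w}_*$ is the base model trained on $\mathcal{D}$; the K-prior replaces the true labels $y_i$ by the base model's predictions $h(f_{\mathbf{w}_*}^i)$ and uses $\mathbf{w}_*$ as the center of the quadratic weight term. Example: for binary cross-entropy, $y\in\{0,1\}$, $A(f)=\log(1+e^f)$ and $h$ is the sigmoid. *)

theory Defs
  imports "HOL-Analysis.Analysis"
begin

definition strictly_convex_on :: "'a::real_vector set \<Rightarrow> ('a \<Rightarrow> real) \<Rightarrow> bool" where
  "strictly_convex_on S g \<longleftrightarrow> convex S \<and>
    (\<forall>x\<in>S. \<forall>y\<in>S. x \<noteq> y \<longrightarrow> (\<forall>u. 0 < u \<and> u < 1 \<longrightarrow>
       g ((1 - u) *\<^sub>R x + u *\<^sub>R y) < (1 - u) * g x + u * g y))"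

text \<open>Exponential-family loss, written in the natural parameter f:
  ell(y, h(f)) = - y f + A(f).\<close>
definition expfam_loss :: "(real \<Rightarrow> real) \<Rightarrow> real \<Rightarrow> real \<Rightarrow> real" where
  "expfam_loss A y f = - y * f + A f"

definition glm_out :: "('i \<Rightarrow> real ^ 'p) \<Rightarrow> real ^ 'p \<Rightarrow> 'i \<Rightarrow> real" where
  "glm_out \<phi> w i = \<phi> i \<bullet> w"

definition ex_loss :: "(real \<Rightarrow> real) \<Rightarrow> ('i \<Rightarrow> real ^ 'p) \<Rightarrow> ('i \<Rightarrow> real) \<Rightarrow> 'i \<Rightarrow> real ^ 'p \<Rightarrow> real" where
  "ex_loss A \<phi> y i w = expfam_loss A (y i) (glm_out \<phi> w i)"

definition reg_risk :: "(real \<Rightarrow> real) \<Rightarrow> ('i \<Rightarrow> real ^ 'p) \<Rightarrow> ('i \<Rightarrow> real) \<Rightarrow> real \<Rightarrow> 'i set \<Rightarrow> real ^ 'p \<Rightarrow> real" where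
  "reg_risk A \<phi> y \<delta> S w = (\<Sum>i\<in>S. ex_loss A \<phi> y i w) + \<delta> / 2 * (norm w)\<^sup>2"

text \<open>K-prior with memory the inputs of D (indexed by D):
  K(w; w_*, X) = sum_{i in D} ell(h(f_{w_*}^i), h(f_w^i)) + delta/2 ||w - w_*||^2.\<close>
definition kprior :: "(real \<Rightarrow> real) \<Rightarrow> (real \<Rightarrow> real) \<Rightarrow> ('i \<Rightarrow> real ^ 'p) \<Rightarrow> real \<Rightarrow> 'i set \<Rightarrow> real ^ 'p \<Rightarrow> real ^ 'p \<Rightarrow> real" where
  "kprior A h \<phi> \<delta> D wstar w =
     (\<Sum>i\<in>D. expfam_loss A (h (glm_out \<phi> wstar i)) (glm_out \<phi> w i)) + \<delta> / 2 * (norm (w - wstar))\<^sup>2"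

definition is_minimizer :: "('a \<Rightarrow> real) \<Rightarrow> 'a \<Rightarrow> bool" where
  "is_minimizer g x \<longleftrightarrow> (\<forall>v. g x \<le> g v)"

end

theory Submission
  imports Defs
begin

lemma mid_le:
  assumes "strictly_convex_on UNIV (A::real\<Rightarrow>real)"
  shows "A ((x + z) / 2) \<le> (A x + A z) / 2"
proof (cases "x = z")
  case True thus ?thesis by simp
next
  case False
  with assms have "A ((1 - 1/2) *\<^sub>R x + (1/2) *\<^sub>R z) < (1 - 1/2) * A x + (1/2) * A z"
    unfolding strictly_convex_on_def by (metis UNIV_I field_sum_of_halves half_gt_zero less_add_same_cancel1 zero_less_one)
  thus ?thesis by (simp add: field_simps)
qed

lemma aux: "(s1::real) \<le> (s2+s3)/2 \<Longrightarrow> n1 < (n2+n3)/2 \<Longrightarrow> s1+n1 < ((s2+n2)+(s3+n3))/2"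
  by (simp add: field_simps)

lemma reg_mid:
  assumes "strictly_convex_on UNIV A" "\<delta> > 0" "a \<noteq> b"
  shows "reg_risk A \<phi> y \<delta> S ((1/2) *\<^sub>R (a + b)) < (reg_risk A \<phi> y \<delta> S a + reg_risk A \<phi> y \<delta> S b) / 2"
proof -
  have t: "ex_loss A \<phi> y i ((1/2) *\<^sub>R (a + b)) \<le> (ex_loss A \<phi> y i a + ex_loss A \<phi> y i b) / 2" for i
  proof -
    have e: "\<phi> i \<bullet> ((1/2) *\<^sub>R (a + b)) = (\<phi> i \<bullet> a + \<phi> i \<bullet> b) / 2"
      by (simp add: inner_add_right)
    show ?thesis unfolding ex_loss_def expfam_loss_def glm_out_def e
      using mid_le[OF assms(1), of "\<phi> i \<bullet> a" "\<phi> i \<bullet> b"] by (simp add: field_simps)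
  qed
  have s: "(\<Sum>i\<in>S. ex_loss A \<phi> y i ((1/2) *\<^sub>R (a + b))) \<le> ((\<Sum>i\<in>S. ex_loss A \<phi> y i a) + (\<Sum>i\<in>S. ex_loss A \<phi> y i b)) / 2"
  proof -
    have "(\<Sum>i\<in>S. ex_loss A \<phi> y i ((1/2) *\<^sub>R (a + b))) \<le> (\<Sum>i\<in>S. (ex_loss A \<phi> y i a + ex_loss A \<phi> y i b) / 2)"
      by (rule sum_mono) (rule t)
    also have "\<dots> = ((\<Sum>i\<in>S. ex_loss A \<phi> y i a) + (\<Sum>i\<in>S. ex_loss A \<phi> y i b)) / 2"
      by (simp only: sum.distrib[symmetric] sum_divide_distrib)
    finally show ?thesis .
  qed
  have n: "(norm ((1/2) *\<^sub>R (a + b)))\<^sup>2 = ((norm a)\<^sup>2 + (norm b)\<^sup>2) / 2 - (norm (a - b))\<^sup>2 / 4"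
    by (simp add: power2_norm_eq_inner inner_add_left inner_add_right inner_diff_left inner_diff_right inner_commute field_simps)
  have "(norm (a - b))\<^sup>2 > 0" using assms(3) by simp
  hence "\<delta> / 2 * (norm ((1/2) *\<^sub>R (a + b)))\<^sup>2 < (\<delta> / 2 * (norm a)\<^sup>2 + \<delta> / 2 * (norm b)\<^sup>2) / 2"
    unfolding n using assms(2) by (simp add: field_simps)
  with s show ?thesis unfolding reg_risk_def using aux by blast
qed

lemma reg_unique:
  assumes "strictly_convex_on UNIV A" "\<delta> > 0"
    "is_minimizer (reg_risk A \<phi> y \<delta> S) a" "is_minimizer (reg_risk A \<phi> y \<delta> S) b"
  shows "a = b"
proof (rule ccontr)
  assume "a \<noteq> b"
  have "reg_risk A \<phi> y \<delta> S ((1/2) *\<^sub>R (a + b)) < (reg_risk A \<phi> y \<delta> S a + reg_risk A \<phi> y \<delta> S b) / 2"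
    by (rule reg_mid[OF assms(1,2) \<open>a \<noteq> b\<close>])
  moreover have "reg_risk A \<phi> y \<delta> S a \<le> reg_risk A \<phi> y \<delta> S ((1/2) *\<^sub>R (a + b))"
    "reg_risk A \<phi> y \<delta> S b \<le> reg_risk A \<phi> y \<delta> S ((1/2) *\<^sub>R (a + b))"
    "reg_risk A \<phi> y \<delta> S a \<le> reg_risk A \<phi> y \<delta> S b" "reg_risk A \<phi> y \<delta> S b \<le> reg_risk A \<phi> y \<delta> S a"
    using assms(3,4) unfolding is_minimizer_def by auto
  ultimately show False by (simp add: field_simps)
qed

lemma min_shift:
  assumes "is_minimizer F x" "\<And>w. F w = G w + c"
  shows "is_minimizer G x"
  using assms unfolding is_minimizer_def by (metis add_le_cancel_right)

lemma stationary:
  fixes A h :: "real \<Rightarrow> real" and \<phi> :: "'i \<Rightarrow> real ^ 'p"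
  assumes finD: "finite D"
    and deriv: "\<And>f. (A has_real_derivative h f) (at f)"
    and wmin: "is_minimizer (reg_risk A \<phi> y \<delta> D) wstar"
  shows "(\<Sum>i\<in>D. (h (\<phi> i \<bullet> wstar) - y i) * (\<phi> i \<bullet> v)) + \<delta> * (wstar \<bullet> v) = 0"
proof -
  define g where "g t = (\<Sum>i\<in>D. - y i * (\<phi> i \<bullet> wstar + t * (\<phi> i \<bullet> v)) + A (\<phi> i \<bullet> wstar + t * (\<phi> i \<bullet> v)))
     + \<delta> / 2 * ((wstar \<bullet> wstar) + 2 * t * (wstar \<bullet> v) + t^2 * (v \<bullet> v))" for t
  have geq: "g t = reg_risk A \<phi> y \<delta> D (wstar + t *\<^sub>R v)" for t
    unfolding g_def reg_risk_def ex_loss_def expfam_loss_def glm_out_def power2_norm_eq_inner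
    by (simp add: inner_add_left inner_add_right inner_commute power2_eq_square algebra_simps)
  have d: "(g has_real_derivative
     (\<Sum>i\<in>D. - y i * (0 + 1 * (\<phi> i \<bullet> v)) + h (\<phi> i \<bullet> wstar + 0 * (\<phi> i \<bullet> v)) * (0 + 1 * (\<phi> i \<bullet> v)))
      + \<delta> / 2 * (0 + 2 * 1 * (wstar \<bullet> v) + (2 * 0) * (v \<bullet> v))) (at 0)"
    unfolding g_def
    apply (rule derivative_eq_intros DERIV_chain2[OF deriv] refl)+
    apply (simp add: algebra_simps)
    done
  have "(\<Sum>i\<in>D. - y i * (0 + 1 * (\<phi> i \<bullet> v)) + h (\<phi> i \<bullet> wstar + 0 * (\<phi> i \<bullet> v)) * (0 + 1 * (\<phi> i \<bullet> v)))
      + \<delta> / 2 * (0 + 2 * 1 * (wstar \<bullet> v) + (2 * 0) * (v \<bullet> v)) = 0"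
  proof (rule DERIV_local_min[OF d, of 1])
    show "\<forall>t. \<bar>0 - t\<bar> < 1 \<longrightarrow> g 0 \<le> g t"
      using wmin unfolding is_minimizer_def geq by simp
  qed simp
  moreover have "(\<Sum>i\<in>D. - y i * (0 + 1 * (\<phi> i \<bullet> v)) + h (\<phi> i \<bullet> wstar + 0 * (\<phi> i \<bullet> v)) * (0 + 1 * (\<phi> i \<bullet> v)))
     = (\<Sum>i\<in>D. (h (\<phi> i \<bullet> wstar) - y i) * (\<phi> i \<bullet> v))"
    by (intro sum.cong refl) (simp add: algebra_simps)
  ultimately show ?thesis by (simp add: algebra_simps)
qed

theorem theorem1:
  fixes A h :: "real \<Rightarrow> real"
    and \<phi> :: "'i \<Rightarrow> real ^ 'p"
    and y :: "'i \<Rightarrow> real"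
    and \<delta> :: real
    and D :: "'i set"
    and j k :: 'i
    and wstar wplus wminus whplus whminus :: "real ^ 'p"
  assumes finD: "finite D"
    and deriv: "\<And>f. (A has_real_derivative h f) (at f)"
    and sconv: "strictly_convex_on UNIV A"
    and delta_pos: "\<delta> > 0"
    and j_new: "j \<notin> D"
    and k_old: "k \<in> D"
    and wstar_min: "is_minimizer (reg_risk A \<phi> y \<delta> D) wstar"
    and wplus_min: "is_minimizer (reg_risk A \<phi> y \<delta> (insert j D)) wplus"
    and wminus_min: "is_minimizer (reg_risk A \<phi> y \<delta> (D - {k})) wminus"
    and whplus_min: "is_minimizer (\<lambda>w. ex_loss A \<phi> y j w + kprior A h \<phi> \<delta> D wstar w) whplus"
    and whminus_min: "is_minimizer (\<lambda>w. - ex_loss A \<phi> y k w + kprior A h \<phi> \<delta> D wstar w) whminus"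
  shows "wplus = whplus \<and> wminus = whminus"
proof -
  have K: "kprior A h \<phi> \<delta> D wstar w = reg_risk A \<phi> y \<delta> D w + \<delta> / 2 * (norm wstar)\<^sup>2" for w
  proof -
    have L: "(\<Sum>i\<in>D. (h (\<phi> i \<bullet> wstar) - y i) * (\<phi> i \<bullet> w)) + \<delta> * (wstar \<bullet> w) = 0"
      by (rule stationary[OF finD deriv wstar_min])
    have "kprior A h \<phi> \<delta> D wstar w - reg_risk A \<phi> y \<delta> D w
       = - (\<Sum>i\<in>D. (h (\<phi> i \<bullet> wstar) - y i) * (\<phi> i \<bullet> w)) + \<delta> / 2 * ((norm (w - wstar))\<^sup>2 - (norm w)\<^sup>2)"
      unfolding kprior_def reg_risk_def ex_loss_def expfam_loss_def glm_out_def
      by (simp add: algebra_simps sum.distrib sum_subtractf sum_negf)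
    also have "(norm (w - wstar))\<^sup>2 - (norm w)\<^sup>2 = (norm wstar)\<^sup>2 - 2 * (wstar \<bullet> w)"
      by (simp add: power2_norm_eq_inner inner_diff_left inner_diff_right inner_commute)
    finally show ?thesis using L by (simp add: algebra_simps)
  qed
  have P: "ex_loss A \<phi> y j w + kprior A h \<phi> \<delta> D wstar w = reg_risk A \<phi> y \<delta> (insert j D) w + \<delta> / 2 * (norm wstar)\<^sup>2" for w
    unfolding K reg_risk_def using finD j_new by (simp add: algebra_simps)
  have M: "- ex_loss A \<phi> y k w + kprior A h \<phi> \<delta> D wstar w = reg_risk A \<phi> y \<delta> (D - {k}) w + \<delta> / 2 * (norm wstar)\<^sup>2" for w
    unfolding K reg_risk_def using finD k_old by (simp add: algebra_simps sum_diff1)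
  have "is_minimizer (reg_risk A \<phi> y \<delta> (insert j D)) whplus"
    by (rule min_shift[OF whplus_min P])
  hence 1: "wplus = whplus" using reg_unique[OF sconv delta_pos wplus_min] by blast
  have "is_minimizer (reg_risk A \<phi> y \<delta> (D - {k})) whminus"
    by (rule min_shift[OF whminus_min M])
  hence 2: "wminus = whminus" using reg_unique[OF sconv delta_pos wminus_min] by blast
  show ?thesis using 1 2 by blast
qed

end
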